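(* Let $(V,C,\sigma)$ be any election with $|V|=n$. For each candidate $a\in C$, the integral domination graph $G(a)$ admits a perfect matching if and only if the $(p^{\mathrm{uni}},q^{\mathrm{plu}})$-domination graph $G_{p^{\mathrm{uni}},q^{\mathrm{plu}}}(a)$ admits a fractional perfect matching. Consequently, there exists a candidate $a\in C$ whose integral domination graph admits a perfect matching, i.e.\ for which there is a bijection $M:V\to V$ with $a\succeq_i \mathrm{top}(M(i))$ for every $i\in V$.
   Context: An election consists of voters $V$ ($|V|=n\ge1$), a finite nonempty candidate set $C$, and a profile of linear orders $\sigma_i$ over $C$; $a\succeq_i c$ means $a=c$ or $i$ ranks $a$ above $c$; $\mathrm{top}(i)$ is $i$'s first choice; $\mathrm{plu}(c)=|\{i:\mathrm{top}(i)=c\}|$. Weights: $p^{\mathrm{uni}}(i)=1/n$ for all $i\in V$, and $q^{\mathrm{plu}}(c)=\mathrm{plu}(c)/n$ for all $c\in C$. For weight vectors $p$ on $V$ and $q$ on $C$ (nonnegative, summing to $1$), the $(p,q)$-domination graph $G_{p,q}(a)$ is the vertex-weighted bipartite graph with left vertices $V$ (weights $p(i)$), right vertices $C$ (weights $q(c)$), and edge $(i,c)$ iff $a\succeq_i c$; a fractional perfect matching is a nonnegative edge weighting whose total at each vertex equals that vertex's weight. The integral domination graph $G(a)$ is the bipartite graph with both sides copies of $V$ and edge $(i,j)$ iff $a\succeq_i\mathrm{top}(j)$. *)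

theory Defs
  imports Complex_Main
begin

text \<open>An election: finite nonempty voter set V, finite nonempty candidate set C,
  and for each voter i a linear order sigma i on C, where (a, c) \<in> sigma i
  means that voter i ranks a at least as high as c (a = c or a above c).\<close>

definition election :: "'v set \<Rightarrow> 'c set \<Rightarrow> ('v \<Rightarrow> ('c \<times> 'c) set) \<Rightarrow> bool" where
  "election V C \<sigma> \<longleftrightarrow> finite V \<and> V \<noteq> {} \<and> finite C \<and> C \<noteq> {} \<and>
     (\<forall>i\<in>V. linear_order_on C (\<sigma> i))"

definition wpref :: "('v \<Rightarrow> ('c \<times> 'c) set) \<Rightarrow> 'v \<Rightarrow> 'c \<Rightarrow> 'c \<Rightarrow> bool" where
  "wpref \<sigma> i a c \<longleftrightarrow> (a, c) \<in> \<sigma> i"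

definition top_choice :: "'c set \<Rightarrow> ('v \<Rightarrow> ('c \<times> 'c) set) \<Rightarrow> 'v \<Rightarrow> 'c" where
  "top_choice C \<sigma> i = (THE a. a \<in> C \<and> (\<forall>c\<in>C. wpref \<sigma> i a c))"

definition plu :: "'v set \<Rightarrow> 'c set \<Rightarrow> ('v \<Rightarrow> ('c \<times> 'c) set) \<Rightarrow> 'c \<Rightarrow> nat" where
  "plu V C \<sigma> c = card {i\<in>V. top_choice C \<sigma> i = c}"

definition p_uni :: "'v set \<Rightarrow> 'v \<Rightarrow> real" where
  "p_uni V i = 1 / real (card V)"

definition q_plu :: "'v set \<Rightarrow> 'c set \<Rightarrow> ('v \<Rightarrow> ('c \<times> 'c) set) \<Rightarrow> 'c \<Rightarrow> real" where
  "q_plu V C \<sigma> c = real (plu V C \<sigma> c) / real (card V)"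

definition has_frac_pm ::
  "'v set \<Rightarrow> 'c set \<Rightarrow> ('v \<Rightarrow> ('c \<times> 'c) set) \<Rightarrow> ('v \<Rightarrow> real) \<Rightarrow> ('c \<Rightarrow> real) \<Rightarrow> 'c \<Rightarrow> bool" where
  "has_frac_pm V C \<sigma> p q a \<longleftrightarrow>
     (\<exists>w :: 'v \<Rightarrow> 'c \<Rightarrow> real.
        (\<forall>i\<in>V. \<forall>c\<in>C. w i c \<ge> 0) \<and>
        (\<forall>i\<in>V. \<forall>c\<in>C. \<not> wpref \<sigma> i a c \<longrightarrow> w i c = 0) \<and>
        (\<forall>i\<in>V. (\<Sum>c\<in>C. w i c) = p i) \<and>
        (\<forall>c\<in>C. (\<Sum>i\<in>V. w i c) = q c))"

text \<open>Integral domination graph G(a): both sides copies of V, edge (i,j) iff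
  a \<succeq>_i top(j).\<close>
definition dom_edge :: "'c set \<Rightarrow> ('v \<Rightarrow> ('c \<times> 'c) set) \<Rightarrow> 'c \<Rightarrow> 'v \<Rightarrow> 'v \<Rightarrow> bool" where
  "dom_edge C \<sigma> a i j \<longleftrightarrow> wpref \<sigma> i a (top_choice C \<sigma> j)"

definition has_pm :: "'v set \<Rightarrow> 'c set \<Rightarrow> ('v \<Rightarrow> ('c \<times> 'c) set) \<Rightarrow> 'c \<Rightarrow> bool" where
  "has_pm V C \<sigma> a \<longleftrightarrow>
     (\<exists>M :: ('v \<times> 'v) set. M \<subseteq> V \<times> V \<and>
        (\<forall>(i, j)\<in>M. dom_edge C \<sigma> a i j) \<and>
        (\<forall>i\<in>V. \<exists>!j. (i, j) \<in> M) \<and>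
        (\<forall>j\<in>V. \<exists>!i. (i, j) \<in> M))"

end

theory Submission
  imports Defs
begin


lemma lin_max:
  assumes lin: "linear_order_on C r" and fin: "finite S" and ne: "S \<noteq> {}" and sub: "S \<subseteq> C"
  shows "\<exists>m\<in>S. \<forall>c\<in>S. (m, c) \<in> r"
  using fin ne sub
proof (induction S rule: finite_ne_induct)
  case (singleton x)
  then show ?case using lin unfolding linear_order_on_def partial_order_on_def preorder_on_def refl_on_def
    by auto
next
  case (insert x F)
  then obtain m where m: "m \<in> F" "\<forall>c\<in>F. (m, c) \<in> r" by auto
  have xC: "x \<in> C" and mC: "m \<in> C" using insert m by auto
  have tr: "trans r" using lin unfolding linear_order_on_def partial_order_on_def preorder_on_def by auto
  have rf: "(x,x) \<in> r" "(m,m) \<in> r" using lin xC mC unfolding linear_order_on_def partial_order_on_def preorder_on_def refl_on_def by auto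
  have tot: "(x, m) \<in> r \<or> (m, x) \<in> r" using lin xC mC rf unfolding linear_order_on_def total_on_def by metis
  show ?case
  proof (cases "(x, m) \<in> r")
    case True
    then show ?thesis using m tr rf unfolding trans_def by blast
  next
    case False
    then show ?thesis using m tot by auto
  qed
qed

lemma lin_min:
  assumes lin: "linear_order_on C r" and fin: "finite S" and ne: "S \<noteq> {}" and sub: "S \<subseteq> C"
  shows "\<exists>m\<in>S. \<forall>c\<in>S. (c, m) \<in> r"
proof -
  have "linear_order_on C (r\<inverse>)" using lin by (simp add: linear_order_on_converse)
  from lin_max[OF this fin ne sub] show ?thesis by auto
qed

lemma top_props:
  assumes "election V C \<sigma>" "i \<in> V"
  shows "top_choice C \<sigma> i \<in> C \<and> (\<forall>c\<in>C. wpref \<sigma> i (top_choice C \<sigma> i) c)"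
proof -
  have lin: "linear_order_on C (\<sigma> i)" and fin: "finite C" "C \<noteq> {}"
    using assms unfolding election_def by auto
  obtain m where m: "m \<in> C" "\<forall>c\<in>C. (m, c) \<in> \<sigma> i" using lin_max[OF lin fin order.refl] by auto
  have as: "antisym (\<sigma> i)" using lin unfolding linear_order_on_def partial_order_on_def by auto
  have "(THE a. a \<in> C \<and> (\<forall>c\<in>C. wpref \<sigma> i a c)) = m"
  proof (rule the_equality)
    show "m \<in> C \<and> (\<forall>c\<in>C. wpref \<sigma> i m c)" using m by (simp add: wpref_def)
    fix a assume "a \<in> C \<and> (\<forall>c\<in>C. wpref \<sigma> i a c)"
    then show "a = m" using m as unfolding wpref_def antisym_def by blast
  qed
  then show ?thesis using m by (simp add: top_choice_def wpref_def)
qed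

lemma wpref_refl:
  assumes "election V C \<sigma>" "i \<in> V" "a \<in> C"
  shows "wpref \<sigma> i a a"
  using assms unfolding election_def linear_order_on_def partial_order_on_def preorder_on_def refl_on_def wpref_def
  by auto

lemma sum_if_const:
  assumes "finite V"
  shows "(\<Sum>i\<in>V. if P i then (k::real) else 0) = real (card {i\<in>V. P i}) * k"
proof -
  have "V \<inter> Collect P = {i\<in>V. P i}" by auto
  then show ?thesis using assms by (simp add: sum.If_cases)
qed

lemma card_tops:
  assumes "election V C \<sigma>" "N \<subseteq> C"
  shows "(\<Sum>c\<in>N. plu V C \<sigma> c) = card {j\<in>V. top_choice C \<sigma> j \<in> N}"
proof -
  have fin: "finite V" "finite C" using assms unfolding election_def by auto
  have fN: "finite N" using fin assms(2) finite_subset by auto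
  have e: "{j\<in>V. top_choice C \<sigma> j \<in> N} = (\<Union>c\<in>N. {j\<in>V. top_choice C \<sigma> j = c})" by auto
  have "card (\<Union>c\<in>N. {j\<in>V. top_choice C \<sigma> j = c}) = (\<Sum>c\<in>N. card {j\<in>V. top_choice C \<sigma> j = c})"
    by (rule card_UN_disjoint) (use fin fN in auto)
  then have "card {j\<in>V. top_choice C \<sigma> j \<in> N} = (\<Sum>c\<in>N. card {j\<in>V. top_choice C \<sigma> j = c})"
    using e by simp
  then show ?thesis by (simp add: plu_def)
qed



lemma hall:
  fixes A :: "'i \<Rightarrow> 'b set"
  assumes "finite I" "\<forall>i\<in>I. finite (A i)" "\<forall>J\<subseteq>I. card J \<le> card (\<Union>(A ` J))"
  shows "\<exists>f. inj_on f I \<and> (\<forall>i\<in>I. f i \<in> A i)"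
  using assms
proof (induction "card I" arbitrary: I A rule: less_induct)
  case less
  note fI = less.prems(1) and fA = less.prems(2) and H = less.prems(3)
  show ?case
  proof (cases "I = {}")
    case True then show ?thesis by auto
  next
    case False
    show ?thesis
    proof (cases "\<exists>J. J \<subseteq> I \<and> J \<noteq> {} \<and> J \<noteq> I \<and> card (\<Union>(A ` J)) = card J")
      case True
      then obtain J where J: "J \<subseteq> I" "J \<noteq> {}" "J \<noteq> I" "card (\<Union>(A ` J)) = card J" by blast
      have fJ: "finite J" using J fI finite_subset by auto
      have lt: "card J < card I" using J fI by (meson psubset_card_mono psubsetI)
      have h1: "\<forall>i\<in>J. finite (A i)" using fA J by auto
      have h2: "\<forall>K\<subseteq>J. card K \<le> card (\<Union>(A ` K))" using H J by auto
      obtain f1 where f1: "inj_on f1 J" "\<forall>i\<in>J. f1 i \<in> A i"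
        using less.hyps[OF lt fJ h1 h2] by blast
      define U where "U = \<Union>(A ` J)"
      have fU: "finite U" using fJ fA J unfolding U_def by auto
      define B where "B i = A i - U" for i
      have "card (I - J) = card I - card J" using J fJ by (simp add: card_Diff_subset)
      moreover have "card J > 0" using fJ J by auto
      moreover have "card J \<le> card I" using J fI by (simp add: card_mono)
      ultimately have "card (I - J) < card I" by linarith
      moreover have "finite (I - J)" using fI by auto
      moreover have "\<forall>i\<in>I - J. finite (B i)" using fA unfolding B_def by auto
      moreover have "\<forall>K\<subseteq>I - J. card K \<le> card (\<Union>(B ` K))"
      proof (intro allI impI)
        fix K assume K: "K \<subseteq> I - J"
        have fK: "finite K" using K fI finite_subset by auto
        have e: "\<Union>(B ` K) = \<Union>(A ` (K \<union> J)) - U" unfolding B_def U_def by auto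
        have sub: "U \<subseteq> \<Union>(A ` (K \<union> J))" unfolding U_def by auto
        have fKJ: "finite (\<Union>(A ` (K \<union> J)))" using fA K J fK fJ by auto
        have "card (\<Union>(B ` K)) = card (\<Union>(A ` (K \<union> J))) - card U"
          using e sub fKJ by (simp add: card_Diff_subset fU)
        moreover have "card (K \<union> J) \<le> card (\<Union>(A ` (K \<union> J)))" using H K J by (meson Diff_subset Un_least subset_trans)
        moreover have "card (K \<union> J) = card K + card J" using K fK fJ by (subst card_Un_disjoint) auto
        moreover have "card U = card J" using J unfolding U_def by simp
        ultimately show "card K \<le> card (\<Union>(B ` K))" by linarith
      qed
      ultimately obtain f2 where f2: "inj_on f2 (I - J)" "\<forall>i\<in>I - J. f2 i \<in> B i"
        using less.hyps by blast
      define f where "f i = (if i \<in> J then f1 i else f2 i)" for i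
      have "inj_on f I"
        unfolding inj_on_def
      proof (intro ballI impI)
        fix x y assume xy: "x \<in> I" "y \<in> I" "f x = f y"
        show "x = y"
        proof (cases "x \<in> J"; cases "y \<in> J")
          assume "x \<in> J" "y \<in> J" then show ?thesis using xy f1 unfolding f_def inj_on_def by auto
        next
          assume a: "x \<in> J" "y \<notin> J"
          then have "f x \<in> U" using f1 unfolding f_def U_def by auto
          moreover have "f y \<notin> U" using a f2 xy(2) unfolding f_def B_def by auto
          ultimately show ?thesis using xy by auto
        next
          assume a: "x \<notin> J" "y \<in> J"
          then have "f y \<in> U" using f1 unfolding f_def U_def by auto
          moreover have "f x \<notin> U" using a f2 xy(1) unfolding f_def B_def by auto
          ultimately show ?thesis using xy by auto
        next
          assume "x \<notin> J" "y \<notin> J" then show ?thesis using xy f2 unfolding f_def inj_on_def by auto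
        qed
      qed
      moreover have "\<forall>i\<in>I. f i \<in> A i" using f1 f2 unfolding f_def B_def by auto
      ultimately show ?thesis by blast
    next
      case False2: False
      obtain i0 where i0: "i0 \<in> I" using False by auto
      have "card {i0} \<le> card (A i0)" using H[rule_format, of "{i0}"] i0 by auto
      then have "A i0 \<noteq> {}" by auto
      then obtain x where x: "x \<in> A i0" by auto
      define B where "B i = A i - {x}" for i
      have "card (I - {i0}) < card I" using i0 fI by (metis card_Diff1_less)
      moreover have "finite (I - {i0})" using fI by auto
      moreover have "\<forall>i\<in>I - {i0}. finite (B i)" using fA unfolding B_def by auto
      moreover have "\<forall>K\<subseteq>I - {i0}. card K \<le> card (\<Union>(B ` K))"
      proof (intro allI impI)
        fix K assume K: "K \<subseteq> I - {i0}"
        show "card K \<le> card (\<Union>(B ` K))"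
        proof (cases "K = {}")
          case True then show ?thesis by simp
        next
          case False
          have fK: "finite K" using K fI finite_subset by auto
          have "K \<subseteq> I" "K \<noteq> I" using K i0 by auto
          then have "card (\<Union>(A ` K)) \<noteq> card K" using False2 False by blast
          moreover have "card K \<le> card (\<Union>(A ` K))" using H \<open>K \<subseteq> I\<close> by auto
          moreover have "\<Union>(B ` K) = \<Union>(A ` K) - {x}" unfolding B_def by auto
          moreover have "finite (\<Union>(A ` K))" using fK fA \<open>K \<subseteq> I\<close> by auto
          moreover have "card (\<Union>(A ` K)) - 1 \<le> card (\<Union>(A ` K) - {x})"
            by (simp add: card_Diff_singleton_if)
          ultimately show ?thesis by simp
        qed
      qed
      ultimately obtain f2 where f2: "inj_on f2 (I - {i0})" "\<forall>i\<in>I - {i0}. f2 i \<in> B i"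
        using less.hyps by blast
      define f where "f = f2(i0 := x)"
      have "inj_on f (insert i0 (I - {i0}))" unfolding f_def
        using f2 by (auto simp: B_def inj_on_def)
      then have "inj_on f I" using i0 by (simp add: insert_absorb)
      moreover have "\<forall>i\<in>I. f i \<in> A i" using f2 x unfolding f_def B_def by auto
      ultimately show ?thesis by blast
    qed
  qed
qed



lemma pm_bij:
  "has_pm V C \<sigma> a \<longleftrightarrow> (\<exists>g. bij_betw g V V \<and> (\<forall>i\<in>V. dom_edge C \<sigma> a i (g i)))"
proof
  assume "has_pm V C \<sigma> a"
  then obtain M where M: "M \<subseteq> V \<times> V" "\<forall>(i, j)\<in>M. dom_edge C \<sigma> a i j"
    "\<forall>i\<in>V. \<exists>!j. (i, j) \<in> M" "\<forall>j\<in>V. \<exists>!i. (i, j) \<in> M"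
    unfolding has_pm_def by blast
  define g where "g i = (THE j. (i, j) \<in> M)" for i
  have gM: "(i, g i) \<in> M" if "i \<in> V" for i
  proof -
    have "\<exists>!j. (i, j) \<in> M" using M(3) that by blast
    then show ?thesis unfolding g_def by (rule theI')
  qed
  have gV: "g i \<in> V" if "i \<in> V" for i using gM[OF that] M(1) by auto
  have inj: "inj_on g V"
  proof (rule inj_onI)
    fix x y assume "x \<in> V" "y \<in> V" "g x = g y"
    then have u: "\<exists>!i. (i, g x) \<in> M" using gV[of x] M(4) by blast
    have "(x, g x) \<in> M" "(y, g x) \<in> M" using gM[of x] gM[of y] \<open>x \<in> V\<close> \<open>y \<in> V\<close> \<open>g x = g y\<close> by auto
    then show "x = y" using u by blast
  qed
  have "g ` V = V"
  proof
    show "g ` V \<subseteq> V" using gV by auto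
    show "V \<subseteq> g ` V"
    proof
      fix j assume j: "j \<in> V"
      then obtain i where i: "(i, j) \<in> M" using M(4) by blast
      then have iV: "i \<in> V" using M(1) by auto
      then have "g i = j" using gM[OF iV] i M(3) by blast
      then show "j \<in> g ` V" using iV by blast
    qed
  qed
  then have "bij_betw g V V" using inj by (simp add: bij_betw_def)
  moreover have "\<forall>i\<in>V. dom_edge C \<sigma> a i (g i)" using gM M(2) by blast
  ultimately show "\<exists>g. bij_betw g V V \<and> (\<forall>i\<in>V. dom_edge C \<sigma> a i (g i))" by blast
next
  assume "\<exists>g. bij_betw g V V \<and> (\<forall>i\<in>V. dom_edge C \<sigma> a i (g i))"
  then obtain g where g: "bij_betw g V V" "\<forall>i\<in>V. dom_edge C \<sigma> a i (g i)" by blast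
  define M where "M = (\<lambda>i. (i, g i)) ` V"
  have "M \<subseteq> V \<times> V" using g(1) unfolding M_def bij_betw_def by auto
  moreover have "\<forall>(i, j)\<in>M. dom_edge C \<sigma> a i j" using g(2) unfolding M_def by auto
  moreover have "\<forall>i\<in>V. \<exists>!j. (i, j) \<in> M" unfolding M_def by auto
  moreover have "\<forall>j\<in>V. \<exists>!i. (i, j) \<in> M"
  proof
    fix j assume j: "j \<in> V"
    then have "j \<in> g ` V" using g(1) unfolding bij_betw_def by simp
    then obtain i where i: "i \<in> V" "g i = j" by blast
    show "\<exists>!i. (i, j) \<in> M"
    proof
      show "(i, j) \<in> M" using i unfolding M_def by auto
      fix i' assume "(i', j) \<in> M"
      then have "i' \<in> V" "g i' = j" unfolding M_def by auto
      then show "i' = i" using i g(1) unfolding bij_betw_def inj_on_def by blast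
    qed
  qed
  ultimately show "has_pm V C \<sigma> a" unfolding has_pm_def by blast
qed

lemma pm_to_frac:
  assumes el: "election V C \<sigma>" and pm: "has_pm V C \<sigma> a"
  shows "has_frac_pm V C \<sigma> (p_uni V) (q_plu V C \<sigma>) a"
proof -
  obtain g where g: "bij_betw g V V" "\<forall>i\<in>V. dom_edge C \<sigma> a i (g i)" using pm_bij[THEN iffD1, OF pm] by blast
  have fin: "finite V" "finite C" using el unfolding election_def by auto
  let ?t = "top_choice C \<sigma>"
  define w where "w i c = (if c = ?t (g i) then 1 / real (card V) else 0)" for i c
  have gV: "g i \<in> V" if "i \<in> V" for i using g(1) that unfolding bij_betw_def by auto
  have "\<forall>i\<in>V. \<forall>c\<in>C. w i c \<ge> 0" unfolding w_def by auto
  moreover have "\<forall>i\<in>V. \<forall>c\<in>C. \<not> wpref \<sigma> i a c \<longrightarrow> w i c = 0"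
    using g(2) unfolding w_def dom_edge_def by auto
  moreover have "\<forall>i\<in>V. (\<Sum>c\<in>C. w i c) = p_uni V i"
  proof
    fix i assume i: "i \<in> V"
    have "?t (g i) \<in> C" using top_props[OF el gV[OF i]] by auto
    then show "(\<Sum>c\<in>C. w i c) = p_uni V i"
      unfolding w_def p_uni_def using fin(2) by (simp add: sum.delta)
  qed
  moreover have "\<forall>c\<in>C. (\<Sum>i\<in>V. w i c) = q_plu V C \<sigma> c"
  proof
    fix c assume c: "c \<in> C"
    have "(\<Sum>i\<in>V. w i c) = real (card {i\<in>V. c = ?t (g i)}) * (1 / real (card V))"
      unfolding w_def by (rule sum_if_const[OF fin(1)])
    moreover have "card {i\<in>V. c = ?t (g i)} = card {j\<in>V. ?t j = c}"
    proof -
      have e: "g ` {i\<in>V. c = ?t (g i)} = {j\<in>V. ?t j = c}"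
      proof
        show "g ` {i\<in>V. c = ?t (g i)} \<subseteq> {j\<in>V. ?t j = c}" using gV by auto
        show "{j\<in>V. ?t j = c} \<subseteq> g ` {i\<in>V. c = ?t (g i)}"
        proof
          fix j assume j: "j \<in> {j\<in>V. ?t j = c}"
          then have "j \<in> g ` V" using g(1) unfolding bij_betw_def by simp
          then obtain i where "i \<in> V" "g i = j" by blast
          moreover have "?t j = c" using j by simp
          ultimately show "j \<in> g ` {i\<in>V. c = ?t (g i)}" by force
        qed
      qed
      have ig: "inj_on g V" using g(1) unfolding bij_betw_def by simp
      have "inj_on g {i\<in>V. c = ?t (g i)}"
        by (rule inj_on_subset[OF ig]) auto
      from card_image[OF this] e show ?thesis by simp
    qed
    ultimately show "(\<Sum>i\<in>V. w i c) = q_plu V C \<sigma> c" unfolding q_plu_def plu_def by simp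
  qed
  ultimately show ?thesis unfolding has_frac_pm_def by (intro exI[of _ w]) simp
qed



lemma frac_to_pm:
  assumes el: "election V C \<sigma>" and fr: "has_frac_pm V C \<sigma> (p_uni V) (q_plu V C \<sigma>) a"
  shows "has_pm V C \<sigma> a"
proof -
  obtain w where w0: "\<forall>i\<in>V. \<forall>c\<in>C. w i c \<ge> 0"
    and we: "\<forall>i\<in>V. \<forall>c\<in>C. \<not> wpref \<sigma> i a c \<longrightarrow> w i c = 0"
    and wr: "\<forall>i\<in>V. (\<Sum>c\<in>C. w i c) = p_uni V i"
    and wc: "\<forall>c\<in>C. (\<Sum>i\<in>V. w i c) = q_plu V C \<sigma> c"
    using fr unfolding has_frac_pm_def by blast
  have fin: "finite V" "finite C" "V \<noteq> {}" using el unfolding election_def by auto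
  have npos: "real (card V) > 0" using fin by auto
  let ?t = "top_choice C \<sigma>"
  define A where "A i = {j\<in>V. dom_edge C \<sigma> a i j}" for i
  have H: "\<forall>S\<subseteq>V. card S \<le> card (\<Union>(A ` S))"
  proof (intro allI impI)
    fix S assume S: "S \<subseteq> V"
    have fS: "finite S" using S fin finite_subset by auto
    define NC where "NC = {c\<in>C. \<exists>i\<in>S. wpref \<sigma> i a c}"
    have NCC: "NC \<subseteq> C" unfolding NC_def by auto
    have fNC: "finite NC" using NCC fin finite_subset by auto
    have U: "\<Union>(A ` S) = {j\<in>V. ?t j \<in> NC}"
      unfolding A_def NC_def dom_edge_def using top_props[OF el] by auto
    have "real (card S) / real (card V) = (\<Sum>i\<in>S. (\<Sum>c\<in>C. w i c))"
      using wr S unfolding p_uni_def by (simp add: subset_iff)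
    also have "\<dots> = (\<Sum>c\<in>C. (\<Sum>i\<in>S. w i c))" by (rule sum.swap)
    also have "\<dots> = (\<Sum>c\<in>NC. (\<Sum>i\<in>S. w i c))"
    proof (rule sum.mono_neutral_right)
      show "finite C" using fin by simp
      show "NC \<subseteq> C" by (rule NCC)
      show "\<forall>c\<in>C - NC. (\<Sum>i\<in>S. w i c) = 0"
        using we S unfolding NC_def by (auto intro!: sum.neutral)
    qed
    also have "\<dots> \<le> (\<Sum>c\<in>NC. (\<Sum>i\<in>V. w i c))"
    proof (rule sum_mono)
      fix c assume c: "c \<in> NC"
      show "(\<Sum>i\<in>S. w i c) \<le> (\<Sum>i\<in>V. w i c)"
        by (rule sum_mono2) (use fin S w0 c NCC in auto)
    qed
    also have "\<dots> = (\<Sum>c\<in>NC. real (plu V C \<sigma> c) / real (card V))"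
      using wc NCC unfolding q_plu_def by (intro sum.cong) auto
    also have "\<dots> = real (\<Sum>c\<in>NC. plu V C \<sigma> c) / real (card V)"
      by (simp add: sum_divide_distrib)
    also have "\<dots> = real (card (\<Union>(A ` S))) / real (card V)"
      using card_tops[OF el NCC] U by simp
    finally have "real (card S) / real (card V) \<le> real (card (\<Union>(A ` S))) / real (card V)" .
    then have "real (card S) \<le> real (card (\<Union>(A ` S)))" using npos by (simp add: divide_le_cancel)
    then show "card S \<le> card (\<Union>(A ` S))" by simp
  qed
  have "\<forall>i\<in>V. finite (A i)" unfolding A_def using fin by auto
  from hall[OF fin(1) this H] obtain f where f: "inj_on f V" "\<forall>i\<in>V. f i \<in> A i" by blast
  have "f ` V \<subseteq> V" using f(2) unfolding A_def by auto
  then have "f ` V = V" using f(1) fin(1) by (simp add: endo_inj_surj)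
  then have "bij_betw f V V" using f(1) by (simp add: bij_betw_def)
  moreover have "\<forall>i\<in>V. dom_edge C \<sigma> a i (f i)" using f(2) unfolding A_def by auto
  ultimately have "\<exists>g. bij_betw g V V \<and> (\<forall>i\<in>V. dom_edge C \<sigma> a i (g i))" by blast
  then show ?thesis by (rule pm_bij[THEN iffD2])
qed



lemma veto:
  fixes s :: "'c \<Rightarrow> nat"
  assumes el: "election V C \<sigma>"
  shows "finite W \<Longrightarrow> W \<noteq> {} \<Longrightarrow> W \<subseteq> V \<Longrightarrow> (\<Sum>c\<in>C. s c) = card W \<Longrightarrow>
    \<exists>a\<in>C. s a > 0 \<and> (\<exists>f. (\<forall>i\<in>W. f i \<in> C \<and> wpref \<sigma> i a (f i)) \<and> (\<forall>c\<in>C. card {i\<in>W. f i = c} = s c))"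
proof (induction W arbitrary: s rule: finite_ne_induct)
  case (singleton x)
  have fC: "finite C" using el unfolding election_def by auto
  have "\<not> (\<forall>c\<in>C. s c = 0)"
  proof
    assume "\<forall>c\<in>C. s c = 0"
    then have "(\<Sum>c\<in>C. s c) = 0" by simp
    then show False using singleton by simp
  qed
  then obtain a where a: "a \<in> C" "s a \<noteq> 0" by blast
  have "s a + (\<Sum>c\<in>C - {a}. s c) = 1" using singleton fC a by (simp add: sum.remove)
  then have sa: "s a = 1" and rest: "(\<Sum>c\<in>C - {a}. s c) = 0" using a by auto
  have rest0: "\<forall>c\<in>C - {a}. s c = 0" using rest fC by simp
  have "\<forall>c\<in>C. card {i\<in>{x}. a = c} = s c"
  proof
    fix c assume c: "c \<in> C"
    show "card {i\<in>{x}. a = c} = s c"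
    proof (cases "c = a")
      case True then show ?thesis using sa by simp
    next
      case False then show ?thesis using rest0 c by auto
    qed
  qed
  moreover have "\<forall>i\<in>{x}. a \<in> C \<and> wpref \<sigma> i a a" using wpref_refl[OF el] singleton a by auto
  ultimately show ?case using a sa by (intro bexI[of _ a]) (auto intro!: exI[of _ "\<lambda>_. a"])
next
  case (insert x F)
  have fC: "finite C" using el unfolding election_def by auto
  have xV: "x \<in> V" using insert by auto
  have lin: "linear_order_on C (\<sigma> x)" using el xV unfolding election_def by auto
  define P where "P = {c\<in>C. s c > 0}"
  have "P \<noteq> {}"
  proof
    assume "P = {}"
    then have "\<forall>c\<in>C. s c = 0" unfolding P_def by auto
    then have "(\<Sum>c\<in>C. s c) = 0" by simp
    then show False using insert by simp
  qed
  moreover have "finite P" "P \<subseteq> C" using fC unfolding P_def by auto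
  ultimately obtain v where v: "v \<in> P" "\<forall>c\<in>P. (c, v) \<in> \<sigma> x" using lin_min[OF lin] by blast
  have vC: "v \<in> C" and sv: "s v > 0" using v unfolding P_def by auto
  define s' where "s' = s(v := s v - 1)"
  have e1: "(\<Sum>c\<in>C. s' c) = s' v + (\<Sum>c\<in>C - {v}. s' c)" using fC vC by (simp add: sum.remove)
  have e2: "(\<Sum>c\<in>C. s c) = s v + (\<Sum>c\<in>C - {v}. s c)" using fC vC by (simp add: sum.remove)
  have e3: "(\<Sum>c\<in>C - {v}. s' c) = (\<Sum>c\<in>C - {v}. s c)" unfolding s'_def by (intro sum.cong) auto
  have "(\<Sum>c\<in>C. s' c) = card F"
    using e1 e2 e3 sv insert.prems insert.hyps unfolding s'_def by simp
  then obtain a f' where a: "a \<in> C" "s' a > 0" and f': "\<forall>i\<in>F. f' i \<in> C \<and> wpref \<sigma> i a (f' i)"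
    "\<forall>c\<in>C. card {i\<in>F. f' i = c} = s' c"
    using insert.IH[of s'] insert.prems by blast
  have sa: "s a > 0" using a(2) unfolding s'_def by (cases "a = v") auto
  then have "a \<in> P" using a unfolding P_def by auto
  then have av: "wpref \<sigma> x a v" using v unfolding wpref_def by auto
  define f where "f = f'(x := v)"
  have "\<forall>i\<in>insert x F. f i \<in> C \<and> wpref \<sigma> i a (f i)"
    using f' av vC insert.hyps unfolding f_def by auto
  moreover have "\<forall>c\<in>C. card {i\<in>insert x F. f i = c} = s c"
  proof
    fix c assume c: "c \<in> C"
    have fF: "finite {i\<in>F. f' i = c}" using insert.hyps by auto
    have eqF: "{i\<in>F. f i = c} = {i\<in>F. f' i = c}" using insert.hyps unfolding f_def by auto
    show "card {i\<in>insert x F. f i = c} = s c"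
    proof (cases "v = c")
      case True
      then have "{i\<in>insert x F. f i = c} = insert x {i\<in>F. f' i = c}" using eqF unfolding f_def by auto
      then have "card {i\<in>insert x F. f i = c} = Suc (card {i\<in>F. f' i = c})"
        using fF insert.hyps by simp
      then show ?thesis using f'(2) c True sv unfolding s'_def by simp
    next
      case False
      then have "{i\<in>insert x F. f i = c} = {i\<in>F. f' i = c}" using eqF insert.hyps unfolding f_def by auto
      then show ?thesis using f'(2) c False unfolding s'_def by simp
    qed
  qed
  ultimately show ?case using a(1) sa by blast
qed



theorem corollary1:
  fixes V :: "'v set" and C :: "'c set" and \<sigma> :: "'v \<Rightarrow> ('c \<times> 'c) set"
  assumes "election V C \<sigma>"
  shows "(\<forall>a\<in>C. has_pm V C \<sigma> a \<longleftrightarrow> has_frac_pm V C \<sigma> (p_uni V) (q_plu V C \<sigma>) a) \<and>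
         (\<exists>a\<in>C. has_pm V C \<sigma> a \<and>
            (\<exists>M. bij_betw M V V \<and> (\<forall>i\<in>V. wpref \<sigma> i a (top_choice C \<sigma> (M i)))))"
proof -
  note el = assms
  have P1: "\<forall>a\<in>C. has_pm V C \<sigma> a \<longleftrightarrow> has_frac_pm V C \<sigma> (p_uni V) (q_plu V C \<sigma>) a"
    using pm_to_frac[OF el] frac_to_pm[OF el] by blast
  have fin: "finite V" "finite C" "V \<noteq> {}" using el unfolding election_def by auto
  have "{j\<in>V. top_choice C \<sigma> j \<in> C} = V" using top_props[OF el] by auto
  then have sp: "(\<Sum>c\<in>C. plu V C \<sigma> c) = card V" using card_tops[OF el order.refl] by simp
  obtain a f where a: "a \<in> C" and f: "\<forall>i\<in>V. f i \<in> C \<and> wpref \<sigma> i a (f i)"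
    "\<forall>c\<in>C. card {i\<in>V. f i = c} = plu V C \<sigma> c"
    using veto[OF el fin(1) fin(3) order.refl sp] by blast
  define w where "w i c = (if c = f i then 1 / real (card V) else 0)" for i c
  have "has_frac_pm V C \<sigma> (p_uni V) (q_plu V C \<sigma>) a"
    unfolding has_frac_pm_def
  proof (intro exI[of _ w] conjI)
    show "\<forall>i\<in>V. \<forall>c\<in>C. 0 \<le> w i c" unfolding w_def by auto
    show "\<forall>i\<in>V. \<forall>c\<in>C. \<not> wpref \<sigma> i a c \<longrightarrow> w i c = 0" unfolding w_def using f(1) by auto
    show "\<forall>i\<in>V. (\<Sum>c\<in>C. w i c) = p_uni V i"
      unfolding w_def p_uni_def using f(1) fin(2) by (simp add: sum.delta)
    show "\<forall>c\<in>C. (\<Sum>i\<in>V. w i c) = q_plu V C \<sigma> c"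
    proof
      fix c assume c: "c \<in> C"
      have "(\<Sum>i\<in>V. w i c) = real (card {i\<in>V. c = f i}) * (1 / real (card V))"
        unfolding w_def by (rule sum_if_const[OF fin(1)])
      moreover have "{i\<in>V. c = f i} = {i\<in>V. f i = c}" by auto
      ultimately show "(\<Sum>i\<in>V. w i c) = q_plu V C \<sigma> c"
        using f(2) c unfolding q_plu_def by simp
    qed
  qed
  then have pm: "has_pm V C \<sigma> a" using P1 a by blast
  then obtain g where g: "bij_betw g V V" "\<forall>i\<in>V. dom_edge C \<sigma> a i (g i)"
    using pm_bij[THEN iffD1, OF pm] by blast
  have "\<forall>i\<in>V. wpref \<sigma> i a (top_choice C \<sigma> (g i))" using g(2) unfolding dom_edge_def by simp
  then have "\<exists>a\<in>C. has_pm V C \<sigma> a \<and>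
            (\<exists>M. bij_betw M V V \<and> (\<forall>i\<in>V. wpref \<sigma> i a (top_choice C \<sigma> (M i))))"
    using a pm g(1) by blast
  with P1 show ?thesis by blast
qed

end
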